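(* Let $A$ and $B$ be countable groups equipped with left-invariant proper metrics, and equip the free product $G=A\ast B$ with the natural left-invariant proper metric induced from $A$ and $B$. If $A$ and $B$ have asymptotic property C, then $G$ has asymptotic property C.
   Context: Writing $\|\cdot\|_A,\|\cdot\|_B$ for the norms $\|a\|=d(e,a)$, the natural metric on $A\ast B$ is $d(g,h)=\|g^{-1}h\|$, where for $g$ with normal form $g=g_1\cdots g_\ell$ (each $g_i$ a non-trivial element of $A$ or $B$, consecutive ones from different factors) $\|g\|=\sum_i\|g_i\|$. A metric is proper if bounded sets are finite. A metric space $X$ has asymptotic property C if for every sequence $R_1\le R_2\le\cdots$ of positive numbers there exist $n$ and families $\mathcal U^1,\dots,\mathcal U^n$ of subsets, each uniformly bounded (sup of diameters finite), with $\mathcal U^i$ $R_i$-disjoint (distinct members at distance $>R_i$), whose union covers $X$. *)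

theory Defs
  imports Complex_Main "HOL-Algebra.Group" "HOL-Library.Countable_Set"
begin

definition metric_on :: "'a set \<Rightarrow> ('a \<Rightarrow> 'a \<Rightarrow> real) \<Rightarrow> bool" where
  "metric_on M d \<longleftrightarrow>
     (\<forall>x\<in>M. \<forall>y\<in>M. 0 \<le> d x y \<and> d x y = d y x \<and> (d x y = 0 \<longleftrightarrow> x = y)) \<and>
     (\<forall>x\<in>M. \<forall>y\<in>M. \<forall>z\<in>M. d x z \<le> d x y + d y z)"

definition bounded_in :: "('a \<Rightarrow> 'a \<Rightarrow> real) \<Rightarrow> 'a set \<Rightarrow> bool" where
  "bounded_in d S \<longleftrightarrow> (\<exists>D. \<forall>x\<in>S. \<forall>y\<in>S. d x y \<le> D)"

definition proper_metric :: "'a set \<Rightarrow> ('a \<Rightarrow> 'a \<Rightarrow> real) \<Rightarrow> bool" where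
  "proper_metric M d \<longleftrightarrow> (\<forall>S. S \<subseteq> M \<longrightarrow> bounded_in d S \<longrightarrow> finite S)"

definition left_invariant :: "('a, 'm) monoid_scheme \<Rightarrow> ('a \<Rightarrow> 'a \<Rightarrow> real) \<Rightarrow> bool" where
  "left_invariant G d \<longleftrightarrow>
     (\<forall>g\<in>carrier G. \<forall>x\<in>carrier G. \<forall>y\<in>carrier G. d (g \<otimes>\<^bsub>G\<^esub> x) (g \<otimes>\<^bsub>G\<^esub> y) = d x y)"

definition unif_bounded :: "('a \<Rightarrow> 'a \<Rightarrow> real) \<Rightarrow> 'a set set \<Rightarrow> bool" where
  "unif_bounded d \<U> \<longleftrightarrow> (\<exists>D. \<forall>U\<in>\<U>. \<forall>x\<in>U. \<forall>y\<in>U. d x y \<le> D)"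

definition R_disjoint :: "('a \<Rightarrow> 'a \<Rightarrow> real) \<Rightarrow> real \<Rightarrow> 'a set set \<Rightarrow> bool" where
  "R_disjoint d R \<U> \<longleftrightarrow>
     (\<forall>U\<in>\<U>. \<forall>V\<in>\<U>. U \<noteq> V \<longrightarrow> (\<forall>x\<in>U. \<forall>y\<in>V. d x y > R))"

text \<open>Sequences R_1 \<le> R_2 \<le> ... are indexed from 0 here; families U^1..U^n
  correspond to indices 0..n-1.\<close>
definition asym_property_C :: "'a set \<Rightarrow> ('a \<Rightarrow> 'a \<Rightarrow> real) \<Rightarrow> bool" where
  "asym_property_C X d \<longleftrightarrow>
     (\<forall>R :: nat \<Rightarrow> real. (\<forall>i. 0 < R i) \<and> mono R \<longrightarrow>
        (\<exists>n. \<exists>\<U> :: nat \<Rightarrow> 'a set set.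
           (\<forall>i<n. (\<forall>U\<in>\<U> i. U \<subseteq> X) \<and> unif_bounded d (\<U> i) \<and> R_disjoint d (R i) (\<U> i)) \<and>
           X \<subseteq> (\<Union>i<n. \<Union>(\<U> i))))"

text \<open>Elements of A * B are reduced words: lists of letters Inl a (a in A) or Inr b
  (b in B), each non-trivial, consecutive letters from different factors.\<close>

fun alternating :: "('a + 'b) list \<Rightarrow> bool" where
  "alternating [] = True"
| "alternating [x] = True"
| "alternating (Inl _ # Inl _ # _) = False"
| "alternating (Inr _ # Inr _ # _) = False"
| "alternating (x # y # w) = alternating (y # w)"

definition letter_ok :: "('a, 'm) monoid_scheme \<Rightarrow> ('b, 'n) monoid_scheme \<Rightarrow> ('a + 'b) \<Rightarrow> bool" where
  "letter_ok A B x = (case x of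
      Inl a \<Rightarrow> a \<in> carrier A \<and> a \<noteq> \<one>\<^bsub>A\<^esub>
    | Inr b \<Rightarrow> b \<in> carrier B \<and> b \<noteq> \<one>\<^bsub>B\<^esub>)"

definition fp_carrier :: "('a, 'm) monoid_scheme \<Rightarrow> ('b, 'n) monoid_scheme \<Rightarrow> ('a + 'b) list set" where
  "fp_carrier A B = {w. (\<forall>x\<in>set w. letter_ok A B x) \<and> alternating w}"

fun fp_cons :: "('a, 'm) monoid_scheme \<Rightarrow> ('b, 'n) monoid_scheme \<Rightarrow> ('a + 'b) \<Rightarrow> ('a + 'b) list \<Rightarrow> ('a + 'b) list" where
  "fp_cons A B (Inl a) w =
     (if a = \<one>\<^bsub>A\<^esub> then w else
       (case w of
          Inl a' # w' \<Rightarrow> (if a \<otimes>\<^bsub>A\<^esub> a' = \<one>\<^bsub>A\<^esub> then w' else Inl (a \<otimes>\<^bsub>A\<^esub> a') # w')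
        | _ \<Rightarrow> Inl a # w))"
| "fp_cons A B (Inr b) w =
     (if b = \<one>\<^bsub>B\<^esub> then w else
       (case w of
          Inr b' # w' \<Rightarrow> (if b \<otimes>\<^bsub>B\<^esub> b' = \<one>\<^bsub>B\<^esub> then w' else Inr (b \<otimes>\<^bsub>B\<^esub> b') # w')
        | _ \<Rightarrow> Inr b # w))"

definition fp_mult :: "('a, 'm) monoid_scheme \<Rightarrow> ('b, 'n) monoid_scheme \<Rightarrow> ('a + 'b) list \<Rightarrow> ('a + 'b) list \<Rightarrow> ('a + 'b) list" where
  "fp_mult A B u v = foldr (fp_cons A B) u v"

definition fp_inv :: "('a, 'm) monoid_scheme \<Rightarrow> ('b, 'n) monoid_scheme \<Rightarrow> ('a + 'b) list \<Rightarrow> ('a + 'b) list" where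
  "fp_inv A B w = rev (map (\<lambda>x. case x of Inl a \<Rightarrow> Inl (inv\<^bsub>A\<^esub> a) | Inr b \<Rightarrow> Inr (inv\<^bsub>B\<^esub> b)) w)"

definition fp_norm :: "('a, 'm) monoid_scheme \<Rightarrow> ('b, 'n) monoid_scheme \<Rightarrow>
    ('a \<Rightarrow> 'a \<Rightarrow> real) \<Rightarrow> ('b \<Rightarrow> 'b \<Rightarrow> real) \<Rightarrow> ('a + 'b) list \<Rightarrow> real" where
  "fp_norm A B dA dB w =
     sum_list (map (\<lambda>x. case x of Inl a \<Rightarrow> dA \<one>\<^bsub>A\<^esub> a | Inr b \<Rightarrow> dB \<one>\<^bsub>B\<^esub> b) w)"

definition fp_dist :: "('a, 'm) monoid_scheme \<Rightarrow> ('b, 'n) monoid_scheme \<Rightarrow>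
    ('a \<Rightarrow> 'a \<Rightarrow> real) \<Rightarrow> ('b \<Rightarrow> 'b \<Rightarrow> real) \<Rightarrow> ('a + 'b) list \<Rightarrow> ('a + 'b) list \<Rightarrow> real" where
  "fp_dist A B dA dB g h = fp_norm A B dA dB (fp_mult A B (fp_inv A B g) h)"

end

theory Submission
  imports Defs
begin


lemma alt_CC: "alternating (x#y#w) = (isl x \<noteq> isl y \<and> alternating (y#w))"
  by (cases x; cases y) auto

lemma alt_Cons: "alternating (x#w) = (alternating w \<and> (w = [] \<or> isl x \<noteq> isl (hd w)))"
  by (cases w) (auto simp: alt_CC)

lemma alt_append: "alternating (xs @ ys) =
   (alternating xs \<and> alternating ys \<and> (xs = [] \<or> ys = [] \<or> isl (last xs) \<noteq> isl (hd ys)))"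
  by (induction xs) (auto simp: alt_Cons)

definition iv :: "('a, 'm) monoid_scheme \<Rightarrow> ('b, 'n) monoid_scheme \<Rightarrow> ('a + 'b) \<Rightarrow> ('a + 'b)" where
  "iv A B x = (case x of Inl a \<Rightarrow> Inl (inv\<^bsub>A\<^esub> a) | Inr b \<Rightarrow> Inr (inv\<^bsub>B\<^esub> b))"

lemma isl_iv[simp]: "isl (iv A B x) = isl x"
  by (cases x) (auto simp: iv_def)

lemma alt_rev_map: "alternating (rev (map (iv A B) w)) = alternating w"
  by (induction w) (auto simp: alt_append alt_Cons last_rev hd_map)

lemma fp_inv_Cons: "fp_inv A B (x#w) = fp_inv A B w @ [iv A B x]"
  by (simp add: fp_inv_def iv_def)

lemma fp_inv_alt: "fp_inv A B w = rev (map (iv A B) w)"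
  by (simp add: fp_inv_def iv_def)

lemma fp_mult_append: "fp_mult A B (u1 @ u2) v = fp_mult A B u1 (fp_mult A B u2 v)"
  by (simp add: fp_mult_def)

lemma fp_mult_Nil[simp]: "fp_mult A B [] v = v" by (simp add: fp_mult_def)
lemma fp_mult_Cons: "fp_mult A B (x#u) v = fp_cons A B x (fp_mult A B u v)" by (simp add: fp_mult_def)

lemma fp_carrier_Cons: "(x#w) \<in> fp_carrier A B \<longleftrightarrow> letter_ok A B x \<and> w \<in> fp_carrier A B \<and> (w = [] \<or> isl x \<noteq> isl (hd w))"
  by (auto simp: fp_carrier_def alt_Cons)

lemma fp_cons_free:
  assumes "x # w \<in> fp_carrier A B"
  shows "fp_cons A B x w = x # w"
proof -
  from assms have ok: "letter_ok A B x" and h: "w = [] \<or> isl x \<noteq> isl (hd w)"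
    by (auto simp: fp_carrier_Cons)
  show ?thesis
  proof (cases x)
    case (Inl a)
    then show ?thesis using ok h by (cases w) (auto simp: letter_ok_def split: sum.splits)
  next
    case (Inr b)
    then show ?thesis using ok h by (cases w) (auto simp: letter_ok_def split: sum.splits)
  qed
qed

lemma fp_carrier_appendD: "u @ v \<in> fp_carrier A B \<Longrightarrow> v \<in> fp_carrier A B"
  by (auto simp: fp_carrier_def alt_append)

lemma fp_mult_free: "u @ v \<in> fp_carrier A B \<Longrightarrow> fp_mult A B u v = u @ v"
proof (induction u)
  case Nil then show ?case by simp
next
  case (Cons x u)
  have "u @ v \<in> fp_carrier A B" using Cons.prems by (auto simp: fp_carrier_Cons)
  then show ?case using Cons by (simp add: fp_mult_Cons fp_cons_free)
qed


locale fpc =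
  fixes A :: "('a, 'm) monoid_scheme" and B :: "('b, 'n) monoid_scheme"
    and dA :: "'a \<Rightarrow> 'a \<Rightarrow> real" and dB :: "'b \<Rightarrow> 'b \<Rightarrow> real"
  assumes gA: "group A" and gB: "group B"
    and mA: "metric_on (carrier A) dA" and mB: "metric_on (carrier B) dB"
    and liA: "left_invariant A dA" and liB: "left_invariant B dB"
begin

definition ln :: "('a + 'b) \<Rightarrow> real" where
  "ln x = (case x of Inl a \<Rightarrow> dA \<one>\<^bsub>A\<^esub> a | Inr b \<Rightarrow> dB \<one>\<^bsub>B\<^esub> b)"

definition nm :: "('a + 'b) list \<Rightarrow> real" where
  "nm w = sum_list (map ln w)"

lemma nm_simps[simp]: "nm [] = 0" "nm (x#w) = ln x + nm w" "nm (u @ v) = nm u + nm v"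
  by (auto simp: nm_def)

lemma fp_norm_nm: "fp_norm A B dA dB w = nm w"
  unfolding fp_norm_def nm_def by (intro arg_cong[where f=sum_list] map_cong) (auto simp: ln_def)

definition ld :: "('a + 'b) \<Rightarrow> ('a + 'b) \<Rightarrow> real" where
  "ld x y = (case x of Inl a \<Rightarrow> (case y of Inl b \<Rightarrow> dA a b | Inr b \<Rightarrow> ln x + ln y)
                     | Inr a \<Rightarrow> (case y of Inl b \<Rightarrow> ln x + ln y | Inr b \<Rightarrow> dB a b))"

fun tdist :: "('a + 'b) list \<Rightarrow> ('a + 'b) list \<Rightarrow> real" where
  "tdist [] h = nm h"
| "tdist (x#g) [] = nm (x#g)"
| "tdist (x#g) (y#h) = (if x = y then tdist g h else ld x y + nm g + nm h)"

abbreviation "G \<equiv> fp_carrier A B"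

lemma oneA: "\<one>\<^bsub>A\<^esub> \<in> carrier A" using gA by (simp add: group.is_monoid monoid.one_closed)
lemma oneB: "\<one>\<^bsub>B\<^esub> \<in> carrier B" using gB by (simp add: group.is_monoid monoid.one_closed)

lemma dA_props: "a \<in> carrier A \<Longrightarrow> b \<in> carrier A \<Longrightarrow> 0 \<le> dA a b \<and> dA a b = dA b a \<and> (dA a b = 0 \<longleftrightarrow> a = b)"
  using mA by (auto simp: metric_on_def)
lemma dB_props: "a \<in> carrier B \<Longrightarrow> b \<in> carrier B \<Longrightarrow> 0 \<le> dB a b \<and> dB a b = dB b a \<and> (dB a b = 0 \<longleftrightarrow> a = b)"
  using mB by (auto simp: metric_on_def)
lemma dA_tri: "a \<in> carrier A \<Longrightarrow> b \<in> carrier A \<Longrightarrow> c \<in> carrier A \<Longrightarrow> dA a c \<le> dA a b + dA b c"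
  using mA by (auto simp: metric_on_def)
lemma dB_tri: "a \<in> carrier B \<Longrightarrow> b \<in> carrier B \<Longrightarrow> c \<in> carrier B \<Longrightarrow> dB a c \<le> dB a b + dB b c"
  using mB by (auto simp: metric_on_def)

lemma ln_nonneg: "letter_ok A B x \<Longrightarrow> 0 \<le> ln x"
  using mA mB oneA oneB by (cases x) (auto simp: ln_def letter_ok_def metric_on_def)

lemma nm_nonneg: "\<forall>x\<in>set w. letter_ok A B x \<Longrightarrow> 0 \<le> nm w"
  by (induction w) (auto intro!: add_nonneg_nonneg ln_nonneg)

lemma letter_ok_iv: "letter_ok A B x \<Longrightarrow> letter_ok A B (iv A B x)"
  using group.inv_closed[OF gA] group.inv_closed[OF gB] group.inv_eq_1_iff[OF gA] group.inv_eq_1_iff[OF gB]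
  by (auto simp: letter_ok_def iv_def split: sum.splits)

lemma dA_inv: "a \<in> carrier A \<Longrightarrow> b \<in> carrier A \<Longrightarrow> dA \<one>\<^bsub>A\<^esub> (inv\<^bsub>A\<^esub> a \<otimes>\<^bsub>A\<^esub> b) = dA a b"
proof -
  assume a: "a \<in> carrier A" and b: "b \<in> carrier A"
  have "dA (a \<otimes>\<^bsub>A\<^esub> \<one>\<^bsub>A\<^esub>) (a \<otimes>\<^bsub>A\<^esub> (inv\<^bsub>A\<^esub> a \<otimes>\<^bsub>A\<^esub> b)) = dA \<one>\<^bsub>A\<^esub> (inv\<^bsub>A\<^esub> a \<otimes>\<^bsub>A\<^esub> b)"
    using liA a b gA oneA unfolding left_invariant_def by (meson group.inv_closed group.is_monoid monoid.m_closed)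
  moreover have "a \<otimes>\<^bsub>A\<^esub> (inv\<^bsub>A\<^esub> a \<otimes>\<^bsub>A\<^esub> b) = b" using a b gA
    by (metis group.inv_solve_left group.inv_closed monoid.m_closed group.is_monoid)
  moreover have "a \<otimes>\<^bsub>A\<^esub> \<one>\<^bsub>A\<^esub> = a" using a gA by (simp add: group.is_monoid monoid.r_one)
  ultimately show ?thesis by simp
qed

lemma dB_inv: "a \<in> carrier B \<Longrightarrow> b \<in> carrier B \<Longrightarrow> dB \<one>\<^bsub>B\<^esub> (inv\<^bsub>B\<^esub> a \<otimes>\<^bsub>B\<^esub> b) = dB a b"
proof -
  assume a: "a \<in> carrier B" and b: "b \<in> carrier B"
  have "dB (a \<otimes>\<^bsub>B\<^esub> \<one>\<^bsub>B\<^esub>) (a \<otimes>\<^bsub>B\<^esub> (inv\<^bsub>B\<^esub> a \<otimes>\<^bsub>B\<^esub> b)) = dB \<one>\<^bsub>B\<^esub> (inv\<^bsub>B\<^esub> a \<otimes>\<^bsub>B\<^esub> b)"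
    using liB a b gB oneB unfolding left_invariant_def by (meson group.inv_closed group.is_monoid monoid.m_closed)
  moreover have "a \<otimes>\<^bsub>B\<^esub> (inv\<^bsub>B\<^esub> a \<otimes>\<^bsub>B\<^esub> b) = b" using a b gB
    by (metis group.inv_solve_left group.inv_closed monoid.m_closed group.is_monoid)
  moreover have "a \<otimes>\<^bsub>B\<^esub> \<one>\<^bsub>B\<^esub> = a" using a gB by (simp add: group.is_monoid monoid.r_one)
  ultimately show ?thesis by simp
qed

lemma ln_iv: "letter_ok A B x \<Longrightarrow> ln (iv A B x) = ln x"
proof (cases x)
  case (Inl a)
  assume ok: "letter_ok A B x"
  then have a: "a \<in> carrier A" using Inl by (auto simp: letter_ok_def)
  have "dA \<one>\<^bsub>A\<^esub> (inv\<^bsub>A\<^esub> a) = dA a \<one>\<^bsub>A\<^esub>"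
    using dA_inv[OF a oneA] a gA by (simp add: group.inv_closed group.is_monoid monoid.r_one)
  then show ?thesis using Inl a dA_props[OF a oneA] by (simp add: ln_def iv_def)
next
  case (Inr a)
  assume ok: "letter_ok A B x"
  then have a: "a \<in> carrier B" using Inr by (auto simp: letter_ok_def)
  have "dB \<one>\<^bsub>B\<^esub> (inv\<^bsub>B\<^esub> a) = dB a \<one>\<^bsub>B\<^esub>"
    using dB_inv[OF a oneB] a gB by (simp add: group.inv_closed group.is_monoid monoid.r_one)
  then show ?thesis using Inr a dB_props[OF a oneB] by (simp add: ln_def iv_def)
qed

lemma nm_fp_inv: "\<forall>x\<in>set w. letter_ok A B x \<Longrightarrow> nm (fp_inv A B w) = nm w"
  by (induction w) (auto simp: fp_inv_alt ln_iv)

lemma fp_inv_carrier: "w \<in> G \<Longrightarrow> fp_inv A B w \<in> G"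
  by (auto simp: fp_carrier_def fp_inv_alt alt_rev_map letter_ok_iv)

lemma cancel: "letter_ok A B x \<Longrightarrow> fp_cons A B (iv A B x) (x # w) = w"
  using group.inv_eq_1_iff[OF gA] group.inv_eq_1_iff[OF gB] group.l_inv[OF gA] group.l_inv[OF gB]
  by (cases x) (auto simp: letter_ok_def iv_def)

lemma merge_same:
  assumes "letter_ok A B x" "letter_ok A B y" "x \<noteq> y" "isl x = isl y"
  shows "\<exists>z. fp_cons A B (iv A B x) (y # w) = z # w \<and> letter_ok A B z \<and> isl z = isl x \<and> ln z = ld x y"
proof (cases x)
  case (Inl a)
  then obtain b where y: "y = Inl b" using assms by (cases y) auto
  have a: "a \<in> carrier A" "a \<noteq> \<one>\<^bsub>A\<^esub>" and b: "b \<in> carrier A" "b \<noteq> \<one>\<^bsub>A\<^esub>" "a \<noteq> b"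
    using assms Inl y by (auto simp: letter_ok_def)
  have ne: "inv\<^bsub>A\<^esub> a \<otimes>\<^bsub>A\<^esub> b \<noteq> \<one>\<^bsub>A\<^esub>"
    using a b gA by (metis group.inv_equality group.inv_inv group.inv_closed)
  have "inv\<^bsub>A\<^esub> a \<noteq> \<one>\<^bsub>A\<^esub>" using a group.inv_eq_1_iff[OF gA] by auto
  then show ?thesis using Inl y ne a b gA dA_inv[OF a(1) b(1)]
    by (auto simp: iv_def letter_ok_def ln_def ld_def group.inv_closed monoid.m_closed group.is_monoid)
next
  case (Inr a)
  then obtain b where y: "y = Inr b" using assms by (cases y) auto
  have a: "a \<in> carrier B" "a \<noteq> \<one>\<^bsub>B\<^esub>" and b: "b \<in> carrier B" "b \<noteq> \<one>\<^bsub>B\<^esub>" "a \<noteq> b"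
    using assms Inr y by (auto simp: letter_ok_def)
  have ne: "inv\<^bsub>B\<^esub> a \<otimes>\<^bsub>B\<^esub> b \<noteq> \<one>\<^bsub>B\<^esub>"
    using a b gB by (metis group.inv_equality group.inv_inv group.inv_closed)
  have "inv\<^bsub>B\<^esub> a \<noteq> \<one>\<^bsub>B\<^esub>" using a group.inv_eq_1_iff[OF gB] by auto
  then show ?thesis using Inr y ne a b gB dB_inv[OF a(1) b(1)]
    by (auto simp: iv_def letter_ok_def ln_def ld_def group.inv_closed monoid.m_closed group.is_monoid)
qed

lemma merge_diff:
  assumes "letter_ok A B x" "isl x \<noteq> isl y"
  shows "fp_cons A B (iv A B x) (y # w) = iv A B x # y # w"
  using assms group.inv_eq_1_iff[OF gA] group.inv_eq_1_iff[OF gB]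
  by (cases x; cases y) (auto simp: letter_ok_def iv_def)

lemma ld_diff: "isl x \<noteq> isl y \<Longrightarrow> ld x y = ln x + ln y"
  by (cases x; cases y) (auto simp: ld_def)


lemma G_letters: "w \<in> G \<Longrightarrow> \<forall>x\<in>set w. letter_ok A B x"
  by (auto simp: fp_carrier_def)

lemma fp_inv_eq_Nil[simp]: "fp_inv A B w = [] \<longleftrightarrow> w = []"
  by (simp add: fp_inv_def)

lemma last_fp_inv: "w \<noteq> [] \<Longrightarrow> last (fp_inv A B w) = iv A B (hd w)"
  by (cases w) (auto simp: fp_inv_Cons)

lemma dist_tdist: "g \<in> G \<Longrightarrow> h \<in> G \<Longrightarrow> fp_dist A B dA dB g h = tdist g h"
proof (induction g h rule: tdist.induct)
  case (1 h)
  then show ?case by (simp add: fp_dist_def fp_norm_nm fp_inv_def)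
next
  case (2 x g)
  have "fp_inv A B (x#g) \<in> G" using 2 fp_inv_carrier by blast
  then have "fp_mult A B (fp_inv A B (x#g)) [] = fp_inv A B (x#g)"
    using fp_mult_free[of "fp_inv A B (x#g)" "[]"] by simp
  then show ?case using nm_fp_inv[OF G_letters[OF "2"(1)]]
    by (simp add: fp_dist_def fp_norm_nm)
next
  case (3 x g y h)
  have gG: "g \<in> G" and hG: "h \<in> G" using 3 by (auto simp: fp_carrier_Cons)
  have okx: "letter_ok A B x" and oky: "letter_ok A B y" using 3 by (auto simp: fp_carrier_Cons)
  have gx: "g = [] \<or> isl x \<noteq> isl (hd g)" and hy: "h = [] \<or> isl y \<noteq> isl (hd h)"
    using 3 by (auto simp: fp_carrier_Cons)
  have base: "fp_dist A B dA dB (x#g) (y#h) = nm (fp_mult A B (fp_inv A B g) (fp_cons A B (iv A B x) (y#h)))"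
    by (simp add: fp_dist_def fp_norm_nm fp_inv_Cons fp_mult_append fp_mult_def)
  have ig: "fp_inv A B g \<in> G" using gG fp_inv_carrier by blast
  have nig: "nm (fp_inv A B g) = nm g" using nm_fp_inv G_letters gG by blast
  show ?case
  proof (cases "x = y")
    case True
    then show ?thesis using base cancel[OF okx] 3(1) gG hG by (simp add: fp_dist_def fp_norm_nm)
  next
    case False
    show ?thesis
    proof (cases "isl x = isl y")
      case True
      obtain z where z: "fp_cons A B (iv A B x) (y # h) = z # h" "letter_ok A B z" "isl z = isl x" "ln z = ld x y"
        using merge_same[OF okx oky False True] by blast
      have zh: "z # h \<in> G" using z hG hy True by (auto simp: fp_carrier_Cons)
      have "fp_inv A B g @ z # h \<in> G"
        using ig zh gx z(3) by (auto simp: fp_carrier_def alt_append last_fp_inv)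
      then have "fp_mult A B (fp_inv A B g) (z # h) = fp_inv A B g @ z # h" by (rule fp_mult_free)
      then show ?thesis using base z False nig by simp
    next
      case False2: False
      have "iv A B x # y # h \<in> G"
        using hG hy False2 letter_ok_iv[OF okx] oky by (auto simp: fp_carrier_Cons)
      moreover have "fp_inv A B g @ iv A B x # y # h \<in> G"
        using calculation ig gx by (auto simp: fp_carrier_def alt_append last_fp_inv)
      then have "fp_mult A B (fp_inv A B g) (iv A B x # y # h) = fp_inv A B g @ iv A B x # y # h" by (rule fp_mult_free)
      then show ?thesis using base merge_diff[OF okx False2] False nig
        ln_iv[OF okx] ld_diff[OF False2] by simp
    qed
  qed
qed


definition okw :: "('a + 'b) list \<Rightarrow> bool" where "okw w \<longleftrightarrow> (\<forall>x\<in>set w. letter_ok A B x)"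

lemma okw_simps[simp]: "okw []" "okw (x#w) \<longleftrightarrow> letter_ok A B x \<and> okw w" "okw (u@v) \<longleftrightarrow> okw u \<and> okw v"
  by (auto simp: okw_def)

lemma G_okw: "w \<in> G \<Longrightarrow> okw w" by (auto simp: okw_def fp_carrier_def)

lemma nm_nonneg': "okw w \<Longrightarrow> 0 \<le> nm w" using nm_nonneg by (auto simp: okw_def)

lemma ld_props:
  assumes "letter_ok A B x" "letter_ok A B y"
  shows "0 \<le> ld x y \<and> ld x y = ld y x \<and> ld x y \<le> ln x + ln y \<and> \<bar>ln x - ln y\<bar> \<le> ld x y"
proof (cases x)
  case (Inl a)
  note xa = Inl
  have a: "a \<in> carrier A" using assms Inl by (auto simp: letter_ok_def)
  show ?thesis
  proof (cases y)
    case (Inl b)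
    have b: "b \<in> carrier A" using assms Inl by (auto simp: letter_ok_def)
    have t1: "dA a b \<le> dA a \<one>\<^bsub>A\<^esub> + dA \<one>\<^bsub>A\<^esub> b" using dA_tri[OF a oneA b] .
    have t2: "dA \<one>\<^bsub>A\<^esub> a \<le> dA \<one>\<^bsub>A\<^esub> b + dA b a" using dA_tri[OF oneA b a] .
    have t3: "dA \<one>\<^bsub>A\<^esub> b \<le> dA \<one>\<^bsub>A\<^esub> a + dA a b" using dA_tri[OF oneA a b] .
    have s: "dA a b = dA b a" "dA a \<one>\<^bsub>A\<^esub> = dA \<one>\<^bsub>A\<^esub> a" "0 \<le> dA a b"
      using dA_props[OF a b] dA_props[OF a oneA] by auto
    show ?thesis using xa Inl t1 t2 t3 s by (auto simp: ld_def ln_def abs_le_iff)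
  next
    case (Inr b)
    then show ?thesis using xa ln_nonneg[OF assms(1)] ln_nonneg[OF assms(2)]
      by (auto simp: ld_def abs_le_iff)
  qed
next
  case (Inr a)
  note xa = Inr
  have a: "a \<in> carrier B" using assms Inr by (auto simp: letter_ok_def)
  show ?thesis
  proof (cases y)
    case (Inr b)
    have b: "b \<in> carrier B" using assms Inr by (auto simp: letter_ok_def)
    have t1: "dB a b \<le> dB a \<one>\<^bsub>B\<^esub> + dB \<one>\<^bsub>B\<^esub> b" using dB_tri[OF a oneB b] .
    have t2: "dB \<one>\<^bsub>B\<^esub> a \<le> dB \<one>\<^bsub>B\<^esub> b + dB b a" using dB_tri[OF oneB b a] .
    have t3: "dB \<one>\<^bsub>B\<^esub> b \<le> dB \<one>\<^bsub>B\<^esub> a + dB a b" using dB_tri[OF oneB a b] .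
    have s: "dB a b = dB b a" "dB a \<one>\<^bsub>B\<^esub> = dB \<one>\<^bsub>B\<^esub> a" "0 \<le> dB a b"
      using dB_props[OF a b] dB_props[OF a oneB] by auto
    show ?thesis using xa Inr t1 t2 t3 s by (auto simp: ld_def ln_def abs_le_iff)
  next
    case (Inl b)
    then show ?thesis using xa ln_nonneg[OF assms(1)] ln_nonneg[OF assms(2)]
      by (auto simp: ld_def abs_le_iff)
  qed
qed

lemma tdist_le: "okw g \<Longrightarrow> okw h \<Longrightarrow> tdist g h \<le> nm g + nm h"
proof (induction g h rule: tdist.induct)
  case (3 x g y h)
  then show ?case using ld_props[of x y] nm_nonneg'[of g] nm_nonneg'[of h] ln_nonneg[of x] ln_nonneg[of y]
    by auto
qed (auto simp: nm_nonneg')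

lemma tdist_nonneg: "okw g \<Longrightarrow> okw h \<Longrightarrow> 0 \<le> tdist g h"
proof (induction g h rule: tdist.induct)
  case (3 x g y h)
  then show ?case using ld_props[of x y] nm_nonneg'[of g] nm_nonneg'[of h] by auto
qed (auto simp: nm_nonneg' simp del: nm_simps)

lemma tdist_sym: "okw g \<Longrightarrow> okw h \<Longrightarrow> tdist g h = tdist h g"
proof (induction g h rule: tdist.induct)
  case (1 h) then show ?case by (cases h) auto
next
  case (3 x g y h)
  then show ?case using ld_props[of x y] by auto
qed auto

lemma tdist_norm: "okw g \<Longrightarrow> okw h \<Longrightarrow> \<bar>nm g - nm h\<bar> \<le> tdist g h"
proof (induction g h rule: tdist.induct)
  case (1 h) then show ?case using nm_nonneg'[of h] by simp
next
  case (2 x g)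
  have "tdist (x#g) [] = nm (x#g)" by (simp only: tdist.simps)
  then show ?case using nm_nonneg'[of "x#g"] 2 by simp
next
  case (3 x g y h)
  then show ?case using ld_props[of x y] nm_nonneg'[of g] nm_nonneg'[of h] by (auto simp: abs_le_iff)
qed

lemma tdist_prefix: "okw (c@g) \<Longrightarrow> okw (c@h) \<Longrightarrow> tdist (c@g) (c@h) = tdist g h"
  by (induction c) auto

lemma tdist_notprefix:
  "okw g \<Longrightarrow> okw h \<Longrightarrow> g = p @ q \<Longrightarrow> (\<nexists>r. h = p @ r) \<Longrightarrow> nm q \<le> tdist g h"
proof (induction g h arbitrary: p rule: tdist.induct)
  case (1 h) then show ?case by auto
next
  case (2 x g)
  have "tdist (x#g) [] = nm p + nm q" using 2(3) by (metis nm_simps(3) tdist.simps(2))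
  then show ?case using 2 nm_nonneg'[of p] by simp
next
  case (3 x g y h)
  show ?case
  proof (cases p)
    case Nil then show ?thesis using 3 by auto
  next
    case (Cons x' p')
    then have xg: "x = x'" "g = p' @ q" using 3 by auto
    show ?thesis
    proof (cases "x = y")
      case True
      then have "\<nexists>r. h = p' @ r" using 3(5) Cons xg by auto
      then show ?thesis using 3 True xg by auto
    next
      case False
      then show ?thesis using 3 xg ld_props[of x y] nm_nonneg'[of p'] nm_nonneg'[of h] by auto
    qed
  qed
qed


fun cut :: "real \<Rightarrow> ('a + 'b) list \<Rightarrow> ('a + 'b) list" where
  "cut t [] = []"
| "cut t (x#w) = (if ln x \<le> t then x # cut (t - ln x) w else [])"

lemma cut_prefix: "\<exists>q. g = cut t g @ q"
  by (induction t g rule: cut.induct) auto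

lemma cut_nm: "0 \<le> t \<Longrightarrow> nm (cut t g) \<le> t"
  by (induction t g rule: cut.induct) auto

lemma cut_next: "g = cut t g @ x # u \<Longrightarrow> t < nm (cut t g) + ln x"
proof (induction t g rule: cut.induct)
  case (1 t) then show ?case by simp
next
  case (2 t y w)
  show ?case
  proof (cases "ln y \<le> t")
    case True
    then have "w = cut (t - ln y) w @ x # u" using 2(2) by simp
    then show ?thesis using 2(1)[OF True] True by simp
  next
    case False then show ?thesis using 2(2) by simp
  qed
qed

lemma cut_max: "okw g \<Longrightarrow> g = p @ r \<Longrightarrow> nm p \<le> t \<Longrightarrow> \<exists>s. cut t g = p @ s"
proof (induction p arbitrary: g t)
  case Nil then show ?case by simp
next
  case (Cons x p)
  then obtain g' where g: "g = x # g'" "g' = p @ r" by auto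
  have okp: "okw p" "letter_ok A B x" using Cons g by auto
  have "ln x \<le> t" using Cons(4) nm_nonneg'[OF okp(1)] by simp
  moreover have "\<exists>s. cut (t - ln x) g' = p @ s"
    using Cons.IH[of g' "t - ln x"] Cons(2,4) g by auto
  ultimately show ?case using g by auto
qed

definition lev :: "real \<Rightarrow> ('a + 'b) list \<Rightarrow> nat" where
  "lev L g = nat \<lfloor>nm g / L\<rfloor>"
definition cc :: "real \<Rightarrow> ('a + 'b) list \<Rightarrow> ('a + 'b) list" where
  "cc L g = cut (real (lev L g) * L - L/2) g"
definition nx :: "real \<Rightarrow> ('a + 'b) list \<Rightarrow> ('a + 'b)" where
  "nx L g = g ! length (cc L g)"

lemma lev_bounds:
  assumes "0 < L" "okw g"
  shows "real (lev L g) * L \<le> nm g \<and> nm g < (real (lev L g) + 1) * L"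
proof -
  have n0: "0 \<le> nm g / L" using nm_nonneg'[OF assms(2)] assms(1) by simp
  have e: "real (lev L g) = real_of_int \<lfloor>nm g / L\<rfloor>" using n0 by (simp add: lev_def)
  have "real_of_int \<lfloor>nm g / L\<rfloor> \<le> nm g / L" "nm g / L < real_of_int \<lfloor>nm g / L\<rfloor> + 1"
    by linarith+
  then have "real_of_int \<lfloor>nm g / L\<rfloor> * L \<le> nm g" "nm g < (real_of_int \<lfloor>nm g / L\<rfloor> + 1) * L"
    using pos_le_divide_eq[OF assms(1)] pos_divide_less_eq[OF assms(1)] by blast+
  then show ?thesis using e by simp
qed

lemma struct:
  assumes "0 < L" "g \<in> G" "lev L g \<noteq> 0"
  shows "\<exists>u. g = cc L g @ nx L g # u \<and> nm u < 3*L/2 \<and> L/2 \<le> ln (nx L g) + nm u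
           \<and> nm (cc L g) \<le> real (lev L g) * L - L/2 \<and> letter_ok A B (nx L g)"
proof -
  define t where "t = real (lev L g) * L - L/2"
  have okg: "okw g" using G_okw assms by blast
  have lb: "real (lev L g) * L \<le> nm g" "nm g < (real (lev L g) + 1) * L"
    using lev_bounds[OF assms(1) okg] by auto
  have "1 \<le> real (lev L g)" using assms(3) by simp
  then have "L \<le> real (lev L g) * L" using assms(1) by simp
  then have t0: "0 \<le> t" using assms(1) by (simp add: t_def)
  obtain q where q: "g = cc L g @ q" using cut_prefix by (auto simp: cc_def)
  have nc: "nm (cc L g) \<le> t" using cut_nm[OF t0] by (simp add: cc_def t_def)
  have "q \<noteq> []" using q nc lb assms(1) by (auto simp: t_def)
  then obtain x u where xu: "q = x # u" by (cases q) auto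
  have "(cc L g @ x # u) ! length (cc L g) = x" by simp
  then have nxx: "nx L g = x" using q xu by (metis nx_def)
  have "t < nm (cc L g) + ln x" using cut_next[of g t x u] q xu by (simp add: cc_def t_def)
  moreover have "nm g = nm (cc L g) + ln x + nm u" using arg_cong[OF q, of nm] xu by simp
  moreover have "letter_ok A B x" using okg arg_cong[OF q, of okw] xu by simp
  ultimately show ?thesis using q xu nxx nc lb unfolding t_def
    by (auto simp: algebra_simps)
qed

lemma cc_diff:
  assumes "0 < L" "g \<in> G" "h \<in> G" "lev L g = lev L h" "lev L g \<noteq> 0" "cc L g \<noteq> cc L h"
  shows "L/2 \<le> tdist g h"
proof -
  have okg: "okw g" and okh: "okw h" using G_okw assms by auto
  obtain u where u: "g = cc L g @ nx L g # u" "L/2 \<le> ln (nx L g) + nm u" "nm (cc L g) \<le> real (lev L g) * L - L/2"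
    using struct[OF assms(1,2,5)] by blast
  obtain v where v: "h = cc L h @ nx L h # v" "L/2 \<le> ln (nx L h) + nm v" "nm (cc L h) \<le> real (lev L h) * L - L/2"
    using struct[OF assms(1,3)] assms(4,5) by auto
  show ?thesis
  proof (cases "(\<exists>r. h = cc L g @ r) \<and> (\<exists>r. g = cc L h @ r)")
    case True
    then obtain r1 r2 where r: "h = cc L g @ r1" "g = cc L h @ r2" by blast
    obtain s1 where s1: "cc L h = cc L g @ s1"
      using cut_max[OF okh r(1)] u(3) assms(4) by (auto simp: cc_def)
    obtain s2 where s2: "cc L g = cc L h @ s2"
      using cut_max[OF okg r(2)] v(3) assms(4) by (auto simp: cc_def)
    have "cc L g = cc L h" using s1 s2 by auto
    then show ?thesis using assms(6) by simp
  next
    case False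
    then have "\<not> (\<exists>r. h = cc L g @ r) \<or> \<not> (\<exists>r. g = cc L h @ r)" by blast
    then show ?thesis
    proof
      assume "\<not> (\<exists>r. h = cc L g @ r)"
      then have "nm (nx L g # u) \<le> tdist g h"
        using tdist_notprefix[OF okg okh u(1)] by blast
      then show ?thesis using u(2) by simp
    next
      assume "\<not> (\<exists>r. g = cc L h @ r)"
      then have "nm (nx L h # v) \<le> tdist h g"
        using tdist_notprefix[OF okh okg v(1)] by blast
      then show ?thesis using v(2) tdist_sym[OF okg okh] by simp
    qed
  qed
qed


lemma mainC:
  assumes CA: "asym_property_C (carrier A) dA" and CB: "asym_property_C (carrier B) dB"
  shows "asym_property_C G (fp_dist A B dA dB)"
  unfolding asym_property_C_def
proof (intro allI impI)
  fix R :: "nat \<Rightarrow> real" assume Rh: "(\<forall>i. 0 < R i) \<and> mono R"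
  define R' where "R' i = R (2*i+1)" for i
  have R'h: "(\<forall>i. 0 < R' i) \<and> mono R'" using Rh by (auto simp: R'_def mono_def)
  obtain nA UA where hA: "\<forall>i<nA. (\<forall>U\<in>UA i. U \<subseteq> carrier A) \<and> unif_bounded dA (UA i) \<and> R_disjoint dA (R' i) (UA i)"
    and cA: "carrier A \<subseteq> (\<Union>i<nA. \<Union>(UA i))"
    using CA[unfolded asym_property_C_def, rule_format, OF R'h] by blast
  obtain nB UB where hB: "\<forall>i<nB. (\<forall>U\<in>UB i. U \<subseteq> carrier B) \<and> unif_bounded dB (UB i) \<and> R_disjoint dB (R' i) (UB i)"
    and cB: "carrier B \<subseteq> (\<Union>i<nB. \<Union>(UB i))"
    using CB[unfolded asym_property_C_def, rule_format, OF R'h] by blast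
  define n where "n = max nA nB"
  have nA0: "0 < nA" using cA oneA by (cases nA) auto
  define DA where "DA i = (SOME D. \<forall>U\<in>UA i. \<forall>x\<in>U. \<forall>y\<in>U. dA x y \<le> D)" for i
  define DB where "DB i = (SOME D. \<forall>U\<in>UB i. \<forall>x\<in>U. \<forall>y\<in>U. dB x y \<le> D)" for i
  have DA: "dA x y \<le> DA i" if "i < nA" "U \<in> UA i" "x \<in> U" "y \<in> U" for i U x y
  proof -
    have "\<exists>D. \<forall>U\<in>UA i. \<forall>x\<in>U. \<forall>y\<in>U. dA x y \<le> D" using hA that(1) by (auto simp: unif_bounded_def)
    then have "\<forall>U\<in>UA i. \<forall>x\<in>U. \<forall>y\<in>U. dA x y \<le> DA i" unfolding DA_def by (rule someI_ex)
    then show ?thesis using that by blast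
  qed
  have DB: "dB x y \<le> DB i" if "i < nB" "U \<in> UB i" "x \<in> U" "y \<in> U" for i U x y
  proof -
    have "\<exists>D. \<forall>U\<in>UB i. \<forall>x\<in>U. \<forall>y\<in>U. dB x y \<le> D" using hB that(1) by (auto simp: unif_bounded_def)
    then have "\<forall>U\<in>UB i. \<forall>x\<in>U. \<forall>y\<in>U. dB x y \<le> DB i" unfolding DB_def by (rule someI_ex)
    then show ?thesis using that by blast
  qed
  define Dm where "Dm = (\<Sum>i<nA. \<bar>DA i\<bar>) + (\<Sum>i<nB. \<bar>DB i\<bar>)"
  have Dm0: "0 \<le> Dm" unfolding Dm_def by (intro add_nonneg_nonneg sum_nonneg) auto
  have DmA: "DA i \<le> Dm" if "i < nA" for i
  proof -
    have "\<bar>DA i\<bar> \<le> (\<Sum>i<nA. \<bar>DA i\<bar>)" using that by (intro member_le_sum) auto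
    moreover have "0 \<le> (\<Sum>i<nB. \<bar>DB i\<bar>)" by (intro sum_nonneg) auto
    ultimately show ?thesis unfolding Dm_def by linarith
  qed
  have DmB: "DB i \<le> Dm" if "i < nB" for i
  proof -
    have "\<bar>DB i\<bar> \<le> (\<Sum>i<nB. \<bar>DB i\<bar>)" using that by (intro member_le_sum) auto
    moreover have "0 \<le> (\<Sum>i<nA. \<bar>DA i\<bar>)" by (intro sum_nonneg) auto
    ultimately show ?thesis unfolding Dm_def by linarith
  qed
  define L where "L = 2 * R (2*n) + 2"
  have L0: "0 < L" using Rh by (simp add: L_def add_pos_pos)
  have RL: "R j < L/2" if "j < 2*n" for j
  proof -
    have "R j \<le> R (2*n)" using Rh that by (auto simp: mono_def)
    then show ?thesis by (simp add: L_def)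
  qed
  define iA where "iA a = (SOME i. i < nA \<and> a \<in> \<Union>(UA i))" for a
  define SA where "SA a = (SOME U. U \<in> UA (iA a) \<and> a \<in> U)" for a
  define iB where "iB a = (SOME i. i < nB \<and> a \<in> \<Union>(UB i))" for a
  define SB where "SB a = (SOME U. U \<in> UB (iB a) \<and> a \<in> U)" for a
  have iA: "iA a < nA \<and> SA a \<in> UA (iA a) \<and> a \<in> SA a" if "a \<in> carrier A" for a
  proof -
    have "\<exists>i. i < nA \<and> a \<in> \<Union>(UA i)" using cA that by blast
    then have 1: "iA a < nA \<and> a \<in> \<Union>(UA (iA a))" unfolding iA_def by (rule someI_ex)
    then have "\<exists>U. U \<in> UA (iA a) \<and> a \<in> U" by blast
    then have "SA a \<in> UA (iA a) \<and> a \<in> SA a" unfolding SA_def by (rule someI_ex)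
    then show ?thesis using 1 by blast
  qed
  have iB: "iB a < nB \<and> SB a \<in> UB (iB a) \<and> a \<in> SB a" if "a \<in> carrier B" for a
  proof -
    have "\<exists>i. i < nB \<and> a \<in> \<Union>(UB i)" using cB that by blast
    then have 1: "iB a < nB \<and> a \<in> \<Union>(UB (iB a))" unfolding iB_def by (rule someI_ex)
    then have "\<exists>U. U \<in> UB (iB a) \<and> a \<in> U" by blast
    then have "SB a \<in> UB (iB a) \<and> a \<in> SB a" unfolding SB_def by (rule someI_ex)
    then show ?thesis using 1 by blast
  qed
  define fi where "fi g = (case nx L g of Inl a \<Rightarrow> iA a | Inr b \<Rightarrow> iB b)" for g
  define fs where "fs g = (case nx L g of Inl a \<Rightarrow> Inl (SA a) | Inr b \<Rightarrow> Inr (SB b))" for g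
  define fam where "fam g = (if lev L g = 0 then 0 else 2 * fi g + lev L g mod 2)" for g
  define key where "key g = (if lev L g = 0 then (0, [], Inl {}) else (lev L g, cc L g, fs g))" for g
  define UU where "UU j = (\<lambda>\<kappa>. {g \<in> G. fam g = j \<and> key g = \<kappa>}) ` UNIV" for j

  have fammod: "fam g mod 2 = lev L g mod 2" for g by (simp add: fam_def)
  have famlt: "fam g < 2*n" if "g \<in> G" for g
  proof (cases "lev L g = 0")
    case True then show ?thesis using nA0 by (simp add: fam_def n_def)
  next
    case False
    have ok: "letter_ok A B (nx L g)" using struct[OF L0 that False] by blast
    have "fi g < n"
    proof (cases "nx L g")
      case (Inl a) then show ?thesis using ok iA[of a] by (auto simp: fi_def letter_ok_def n_def less_max_iff_disj)
    next
      case (Inr a) then show ?thesis using ok iB[of a] by (auto simp: fi_def letter_ok_def n_def less_max_iff_disj)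
    qed
    then show ?thesis using False by (simp add: fam_def)
  qed

  have bnd: "tdist g h \<le> 3*L + Dm" if gG: "g \<in> G" and hG: "h \<in> G" and kk: "key g = key h" for g h
  proof -
    have okg: "okw g" and okh: "okw h" using gG hG G_okw by auto
    show ?thesis
    proof (cases "lev L g = 0")
      case True
      then have "lev L h = 0" using kk by (auto simp: key_def split: if_splits)
      then have "nm g < L" "nm h < L" using lev_bounds[OF L0 okg] lev_bounds[OF L0 okh] True by auto
      then show ?thesis using tdist_le[OF okg okh] Dm0 L0 by linarith
    next
      case False
      then have e: "lev L h = lev L g" "cc L h = cc L g" "fs h = fs g" and Fh: "lev L h \<noteq> 0"
        using kk by (auto simp: key_def split: if_splits)
      obtain u where u: "g = cc L g @ nx L g # u" "nm u < 3*L/2" "letter_ok A B (nx L g)"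
        using struct[OF L0 gG False] by blast
      obtain v where v: "h = cc L g @ nx L h # v" "nm v < 3*L/2" "letter_ok A B (nx L h)"
        using struct[OF L0 hG Fh] e by auto
      have td: "tdist g h = tdist (nx L g # u) (nx L h # v)"
        using tdist_prefix[of "cc L g" "nx L g # u" "nx L h # v"] u(1) v(1) okg okh by metis
      have oku: "okw u" and okv: "okw v" using okg okh arg_cong[OF u(1), of okw] arg_cong[OF v(1), of okw] by auto
      show ?thesis
      proof (cases "nx L g = nx L h")
        case True
        then show ?thesis using td tdist_le[OF oku okv] u(2) v(2) Dm0 by simp
      next
        case False
        have "ld (nx L g) (nx L h) \<le> Dm"
        proof (cases "nx L g")
          case (Inl a)
          then obtain b where b: "nx L h = Inl b" "SA b = SA a" using e(3)
            by (cases "nx L h") (auto simp: fs_def)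
          have a: "a \<in> carrier A" and bA: "b \<in> carrier A" using u(3) v(3) Inl b by (auto simp: letter_ok_def)
          have "dA a b \<le> DA (iA a)" using DA[of "iA a" "SA a" a b] iA[OF a] iA[OF bA] b by auto
          then show ?thesis using Inl b DmA[of "iA a"] iA[OF a] by (simp add: ld_def)
        next
          case (Inr a)
          then obtain b where b: "nx L h = Inr b" "SB b = SB a" using e(3)
            by (cases "nx L h") (auto simp: fs_def)
          have a: "a \<in> carrier B" and bB: "b \<in> carrier B" using u(3) v(3) Inr b by (auto simp: letter_ok_def)
          have "dB a b \<le> DB (iB a)" using DB[of "iB a" "SB a" a b] iB[OF a] iB[OF bB] b by auto
          then show ?thesis using Inr b DmB[of "iB a"] iB[OF a] by (simp add: ld_def)
        qed
        then show ?thesis using td False u(2) v(2) by simp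
      qed
    qed
  qed

  have sep: "R (fam g) < tdist g h" if gG: "g \<in> G" and hG: "h \<in> G" and ff: "fam g = fam h" and kk: "key g \<noteq> key h" for g h
  proof -
    have okg: "okw g" and okh: "okw h" using gG hG G_okw by auto
    have RLg: "R (fam g) < L/2" using RL famlt[OF gG] by blast
    have tn: "\<bar>nm g - nm h\<bar> \<le> tdist g h" using tdist_norm[OF okg okh] .
    show ?thesis
    proof (cases "lev L g = lev L h")
      case False
      have "lev L g mod 2 = lev L h mod 2" using fammod ff by metis
      then have "lev L g + 2 \<le> lev L h \<or> lev L h + 2 \<le> lev L g" using False by presburger
      then have "L < \<bar>nm g - nm h\<bar>"
      proof
        assume le: "lev L g + 2 \<le> lev L h"
        then have "(real (lev L g) + 2) * L \<le> real (lev L h) * L" using L0 by (intro mult_right_mono) auto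
        then show ?thesis using lev_bounds[OF L0 okg] lev_bounds[OF L0 okh] by (simp add: algebra_simps)
      next
        assume le: "lev L h + 2 \<le> lev L g"
        then have "(real (lev L h) + 2) * L \<le> real (lev L g) * L" using L0 by (intro mult_right_mono) auto
        then show ?thesis using lev_bounds[OF L0 okg] lev_bounds[OF L0 okh] by (simp add: algebra_simps)
      qed
      then show ?thesis using tn RLg by linarith
    next
      case True
      show ?thesis
      proof (cases "lev L g = 0")
        case True2: True
        then show ?thesis using True kk by (simp add: key_def)
      next
        case False
        show ?thesis
        proof (cases "cc L g = cc L h")
          case False2: False
          then show ?thesis using cc_diff[OF L0 gG hG True False] RLg by linarith
        next
          case True2: True
          have Fh: "lev L h \<noteq> 0" using True False by simp
          have fsne: "fs g \<noteq> fs h" using kk True True2 False by (simp add: key_def)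
          have fieq: "fi g = fi h" using ff True False by (simp add: fam_def)
          obtain u where u: "g = cc L g @ nx L g # u" "L/2 \<le> ln (nx L g) + nm u" "letter_ok A B (nx L g)"
            using struct[OF L0 gG False] by blast
          obtain v where v: "h = cc L g @ nx L h # v" "letter_ok A B (nx L h)"
            using struct[OF L0 hG Fh] True2 by auto
          have td: "tdist g h = tdist (nx L g # u) (nx L h # v)"
            using tdist_prefix[of "cc L g" "nx L g # u" "nx L h # v"] u(1) v(1) okg okh by metis
          have oku: "okw u" and okv: "okw v" using okg okh arg_cong[OF u(1), of okw] arg_cong[OF v(1), of okw] by auto
          have xy: "nx L g \<noteq> nx L h" using fsne by (auto simp: fs_def)
          have td2: "tdist g h = ld (nx L g) (nx L h) + nm u + nm v" using td xy by simp
          have nu: "0 \<le> nm u" "0 \<le> nm v" using nm_nonneg' oku okv by auto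
          have famle: "fam g \<le> 2 * fi g + 1" using False by (simp add: fam_def)
          show ?thesis
          proof (cases "isl (nx L g) = isl (nx L h)")
            case False3: False
            have "ld (nx L g) (nx L h) = ln (nx L g) + ln (nx L h)" using ld_diff[OF False3] .
            then show ?thesis using td2 u(2) nu ln_nonneg[OF v(2)] RLg by linarith
          next
            case True3: True
            show ?thesis
            proof (cases "nx L g")
              case (Inl a)
              then obtain b where b: "nx L h = Inl b" using True3 by (cases "nx L h") auto
              have a: "a \<in> carrier A" and bA: "b \<in> carrier A" using u(3) v(2) Inl b by (auto simp: letter_ok_def)
              have ii: "iA a = iA b" using fieq Inl b by (simp add: fi_def)
              have ne: "SA a \<noteq> SA b" using fsne Inl b by (simp add: fs_def)
              have "R' (iA a) < dA a b"
                using hA iA[OF a] iA[OF bA] ne ii unfolding R_disjoint_def by metis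
              moreover have "R (fam g) \<le> R' (iA a)"
                using famle Rh Inl by (auto simp: R'_def fi_def mono_def)
              ultimately show ?thesis using td2 nu Inl b by (simp add: ld_def)
            next
              case (Inr a)
              then obtain b where b: "nx L h = Inr b" using True3 by (cases "nx L h") auto
              have a: "a \<in> carrier B" and bB: "b \<in> carrier B" using u(3) v(2) Inr b by (auto simp: letter_ok_def)
              have ii: "iB a = iB b" using fieq Inr b by (simp add: fi_def)
              have ne: "SB a \<noteq> SB b" using fsne Inr b by (simp add: fs_def)
              have "R' (iB a) < dB a b"
                using hB iB[OF a] iB[OF bB] ne ii unfolding R_disjoint_def by metis
              moreover have "R (fam g) \<le> R' (iB a)"
                using famle Rh Inr by (auto simp: R'_def fi_def mono_def)
              ultimately show ?thesis using td2 nu Inr b by (simp add: ld_def)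
            qed
          qed
        qed
      qed
    qed
  qed

  have sub: "\<forall>U\<in>UU j. U \<subseteq> G" for j by (auto simp: UU_def)
  have ub: "unif_bounded (fp_dist A B dA dB) (UU j)" for j
    unfolding unif_bounded_def
  proof (intro exI[of _ "3*L + Dm"] ballI)
    fix U g h assume "U \<in> UU j" "g \<in> U" "h \<in> U"
    then have "g \<in> G" "h \<in> G" "key g = key h" by (auto simp: UU_def)
    then show "fp_dist A B dA dB g h \<le> 3*L + Dm" using bnd dist_tdist by simp
  qed
  have rd: "R_disjoint (fp_dist A B dA dB) (R j) (UU j)" for j
    unfolding R_disjoint_def
  proof (intro ballI impI)
    fix U V g h assume UV: "U \<in> UU j" "V \<in> UU j" "U \<noteq> V" "g \<in> U" "h \<in> V"
    obtain k1 where U: "U = {g \<in> G. fam g = j \<and> key g = k1}" using UV(1) unfolding UU_def by blast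
    obtain k2 where V: "V = {g \<in> G. fam g = j \<and> key g = k2}" using UV(2) unfolding UU_def by blast
    have "k1 \<noteq> k2" using UV(3) U V by blast
    moreover have "g \<in> G" "fam g = j" "key g = k1" using UV(4) U by auto
    moreover have "h \<in> G" "fam h = j" "key h = k2" using UV(5) V by auto
    ultimately have "g \<in> G" "h \<in> G" "fam g = j" "fam h = j" "key g \<noteq> key h" by auto
    then show "R j < fp_dist A B dA dB g h" using sep[of g h] dist_tdist by simp
  qed
  have cov: "G \<subseteq> (\<Union>j<2*n. \<Union>(UU j))"
  proof
    fix g assume g: "g \<in> G"
    have "{g' \<in> G. fam g' = fam g \<and> key g' = key g} \<in> UU (fam g)" by (auto simp: UU_def)
    then show "g \<in> (\<Union>j<2*n. \<Union>(UU j))" using g famlt[OF g] by blast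
  qed
  show "\<exists>n UU. (\<forall>i<n. (\<forall>U\<in>UU i. U \<subseteq> G) \<and> unif_bounded (fp_dist A B dA dB) (UU i)
           \<and> R_disjoint (fp_dist A B dA dB) (R i) (UU i)) \<and> G \<subseteq> (\<Union>i<n. \<Union>(UU i))"
  proof (intro exI[of _ "2*n"] exI[of _ UU] conjI allI impI)
    show "G \<subseteq> (\<Union>i<2*n. \<Union>(UU i))" by (rule cov)
  qed (use sub ub rd in auto)
qed


end

theorem theorem4p4:
  fixes A :: "('a, 'm) monoid_scheme" and B :: "('b, 'n) monoid_scheme"
    and dA :: "'a \<Rightarrow> 'a \<Rightarrow> real" and dB :: "'b \<Rightarrow> 'b \<Rightarrow> real"
  assumes "group A" and "group B"
    and "countable (carrier A)" and "countable (carrier B)"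
    and "metric_on (carrier A) dA" and "metric_on (carrier B) dB"
    and "left_invariant A dA" and "left_invariant B dB"
    and "proper_metric (carrier A) dA" and "proper_metric (carrier B) dB"
    and "asym_property_C (carrier A) dA" and "asym_property_C (carrier B) dB"
  shows "asym_property_C (fp_carrier A B) (fp_dist A B dA dB)"
proof -
  interpret fpc A B dA dB
    by (rule fpc.intro) (rule assms)+
  show ?thesis using mainC assms(11,12) by blast
qed

end
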